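(* For all natural numbers $n \neq m$, the terms $B\,Y_0\,S^{n}\,I$ and $B\,Y_0\,S^{m}\,I$ are not $\beta$-convertible; that is, the Scott sequence $B Y_0 I,\ B Y_0 S I,\ B Y_0 S S I,\ \ldots$ contains no duplicates.
   Context: Untyped $\lambda$-calculus with $\beta$-conversion. $I = \lambda x.x$, $S = \lambda xyz.\,xz(yz)$, $B = \lambda xyz.\,x(yz)$, and $Y_0 = \lambda f.\,\omega_f\,\omega_f$ with $\omega_f = \lambda x.\,f(xx)$. $A\,C^n$ denotes the left-associated application $A C\cdots C$ with $n$ copies of $C$. *)

theory Defs
  imports Main
begin

datatype lterm = Var nat | App lterm lterm | Abs lterm

primrec lift :: "lterm \<Rightarrow> nat \<Rightarrow> lterm" where
  "lift (Var i) k = (if i < k then Var i else Var (Suc i))"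
| "lift (App s t) k = App (lift s k) (lift t k)"
| "lift (Abs s) k = Abs (lift s (Suc k))"

primrec subst :: "lterm \<Rightarrow> lterm \<Rightarrow> nat \<Rightarrow> lterm" where
  "subst (Var i) s k = (if k < i then Var (i - 1) else if i = k then s else Var i)"
| "subst (App t u) s k = App (subst t s k) (subst u s k)"
| "subst (Abs t) s k = Abs (subst t (lift s 0) (Suc k))"

inductive beta :: "lterm \<Rightarrow> lterm \<Rightarrow> bool" where
  beta_redex: "beta (App (Abs s) t) (subst s t 0)"
| appL: "beta s t \<Longrightarrow> beta (App s u) (App t u)"
| appR: "beta s t \<Longrightarrow> beta (App u s) (App u t)"
| abs: "beta s t \<Longrightarrow> beta (Abs s) (Abs t)"

definition beta_conv :: "lterm \<Rightarrow> lterm \<Rightarrow> bool" where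
  "beta_conv = equivclp beta"

text \<open>Left-associated iterated application A C^n = A C ... C (n copies).\<close>
primrec app_pow :: "lterm \<Rightarrow> lterm \<Rightarrow> nat \<Rightarrow> lterm" where
  "app_pow A C 0 = A"
| "app_pow A C (Suc n) = App (app_pow A C n) C"

definition combI :: lterm where "combI = Abs (Var 0)"

text \<open>S = \<lambda>x y z. x z (y z)\<close>
definition combS :: lterm where
  "combS = Abs (Abs (Abs (App (App (Var 2) (Var 0)) (App (Var 1) (Var 0)))))"

text \<open>B = \<lambda>x y z. x (y z)\<close>
definition combB :: lterm where
  "combB = Abs (Abs (Abs (App (Var 2) (App (Var 1) (Var 0)))))"

text \<open>Y0 = \<lambda>f. w w with w = \<lambda>x. f (x x)\<close>
definition combY0 :: lterm where
  "combY0 = Abs (App (Abs (App (Var 1) (App (Var 0) (Var 0))))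
                     (Abs (App (Var 1) (App (Var 0) (Var 0)))))"

end

theory Submission
  imports Defs "HOL-Library.Confluence"
begin

lemma lift_lift:
  "i < k + 1 \<Longrightarrow> lift (lift t i) (Suc k) = lift (lift t k) i"
  by (induct t arbitrary: i k) auto

lemma lift_subst [simp]:
  "j < i + 1 \<Longrightarrow> lift (subst t s j) i = subst (lift t (i + 1)) (lift s i) j"
  by (induct t arbitrary: i j s)
    (simp_all add: diff_Suc lift_lift split: nat.split)

lemma lift_subst_lt:
  "i < j + 1 \<Longrightarrow> lift (subst t s j) i = subst (lift t i) (lift s i) (j + 1)"
  by (induct t arbitrary: i j s) (auto simp add: lift_lift)

lemma subst_lift [simp]: "subst (lift t k) s k = t"
  by (induct t arbitrary: k s) simp_all

lemma subst_subst:
  "i < j + 1 \<Longrightarrow> subst (subst t (lift v i) (Suc j)) (subst u v j) i = subst (subst t u i) v j"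
  by (induct t arbitrary: i j u v)
    (simp_all add: diff_Suc lift_lift [symmetric] lift_subst_lt split: nat.split)

section \<open>Parallel reduction and confluence\<close>

inductive par :: "lterm \<Rightarrow> lterm \<Rightarrow> bool" where
  pvar [simp, intro!]: "par (Var n) (Var n)"
| pabs [simp, intro!]: "par s t \<Longrightarrow> par (Abs s) (Abs t)"
| papp [simp, intro!]: "par s s' \<Longrightarrow> par t t' \<Longrightarrow> par (App s t) (App s' t')"
| pbeta [simp, intro!]: "par s s' \<Longrightarrow> par t t' \<Longrightarrow> par (App (Abs s) t) (subst s' t' 0)"

inductive_cases par_cases:
  "par (Var n) t" "par (Abs s) t" "par (App s t) u"

lemma par_refl [simp]: "par t t"
  by (induct t) simp_all

lemma beta_par: "beta s t \<Longrightarrow> par s t"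
  by (induct rule: beta.induct) auto

lemma rtc_appL: "beta\<^sup>*\<^sup>* s t \<Longrightarrow> beta\<^sup>*\<^sup>* (App s u) (App t u)"
  by (induct rule: rtranclp_induct) (auto intro: rtranclp.rtrancl_into_rtrancl beta.appL)
lemma rtc_appR: "beta\<^sup>*\<^sup>* s t \<Longrightarrow> beta\<^sup>*\<^sup>* (App u s) (App u t)"
  by (induct rule: rtranclp_induct) (auto intro: rtranclp.rtrancl_into_rtrancl beta.appR)
lemma rtc_abs: "beta\<^sup>*\<^sup>* s t \<Longrightarrow> beta\<^sup>*\<^sup>* (Abs s) (Abs t)"
  by (induct rule: rtranclp_induct) (auto intro: rtranclp.rtrancl_into_rtrancl beta.abs)

lemma par_beta: "par s t \<Longrightarrow> beta\<^sup>*\<^sup>* s t"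
proof (induct rule: par.induct)
  case (pvar n) then show ?case by simp
next
  case (pabs s t) then show ?case by (simp add: rtc_abs)
next
  case (papp s s' t t') then show ?case
    by (meson rtc_appL rtc_appR rtranclp_trans)
next
  case (pbeta s s' t t')
  have "beta\<^sup>*\<^sup>* (App (Abs s) t) (App (Abs s') t')"
    using pbeta by (meson rtc_abs rtc_appL rtc_appR rtranclp_trans)
  then show ?case by (meson beta.beta_redex rtranclp.rtrancl_into_rtrancl)
qed

lemma par_lift [simp]: "par t t' \<Longrightarrow> par (lift t n) (lift t' n)"
  by (induct arbitrary: n rule: par.induct) auto

lemma par_subst: "par t t' \<Longrightarrow> par s s' \<Longrightarrow> par (subst t s n) (subst t' s' n)"
proof (induct arbitrary: s s' n rule: par.induct)
  case (pbeta u u' v v')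
  then show ?case by (simp add: subst_subst [symmetric])
qed auto

lemma par_abs_inv: "par (Abs s) t \<Longrightarrow> \<exists>t'. t = Abs t' \<and> par s t'"
  by (erule par_cases) auto

lemma par_app_inv: "par (App s t) u \<Longrightarrow>
  (\<exists>s' t'. u = App s' t' \<and> par s s' \<and> par t t') \<or>
  (\<exists>r r' t'. s = Abs r \<and> u = subst r' t' 0 \<and> par r r' \<and> par t t')"
  by (erule par_cases) auto

lemma par_diamond: "par x y \<Longrightarrow> par x z \<Longrightarrow> \<exists>u. par y u \<and> par z u"
proof (induct arbitrary: z rule: par.induct)
  case (pvar n) then show ?case by (auto elim: par_cases)
next
  case (pabs s t)
  from par_abs_inv[OF pabs(3)] obtain t' where "z = Abs t'" "par s t'" by blast
  with pabs(2) show ?case by blast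
next
  case (papp s s' t t')
  from par_app_inv[OF papp(5)] show ?case
  proof (elim disjE exE conjE)
    fix s'' t'' assume 1: "z = App s'' t''" "par s s''" "par t t''"
    from papp(2) 1 obtain u where "par s' u" "par s'' u" by blast
    moreover from papp(4) 1 obtain v where "par t' v" "par t'' v" by blast
    ultimately show ?thesis using 1 by blast
  next
    fix r r' t'' assume 2: "s = Abs r" "z = subst r' t'' 0" "par r r'" "par t t''"
    from papp(1) \<open>s = Abs r\<close> obtain r1 where r1: "s' = Abs r1" "par r r1"
      using par_abs_inv by blast
    have "par (Abs r) (Abs r')" using 2 by blast
    from papp(2) this \<open>s = Abs r\<close> obtain u where "par s' u" "par (Abs r') u" by blast
    then obtain u' where u': "u = Abs u'" "par r' u'" using par_abs_inv by blast
    from \<open>par s' u\<close> r1 u' have "par r1 u'" using par_abs_inv by blast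
    from papp(4) \<open>par t t''\<close> obtain v where "par t' v" "par t'' v" by blast
    then show ?thesis using u' r1 2 \<open>par r1 u'\<close> by (auto intro!: par_subst)
  qed
next
  case (pbeta s s' t t')
  from par_app_inv[OF pbeta(5)] show ?case
  proof (elim disjE exE conjE)
    fix s'' t'' assume 1: "z = App s'' t''" "par (Abs s) s''" "par t t''"
    then obtain r'' where r'': "s'' = Abs r''" "par s r''" using par_abs_inv by blast
    from pbeta(2) r'' obtain u where "par s' u" "par r'' u" by blast
    moreover from pbeta(4) 1 obtain v where "par t' v" "par t'' v" by blast
    ultimately show ?thesis using 1 r'' by (auto intro!: par_subst)
  next
    fix r r' t'' assume 2: "Abs s = Abs r" "z = subst r' t'' 0" "par r r'" "par t t''"
    from pbeta(2) 2 obtain u where "par s' u" "par r' u" by blast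
    moreover from pbeta(4) 2 obtain v where "par t' v" "par t'' v" by blast
    ultimately show ?thesis using 2 by (auto intro!: par_subst)
  qed
qed

lemma par_strip: "par\<^sup>*\<^sup>* x y \<Longrightarrow> par x z \<Longrightarrow> \<exists>u. par y u \<and> par\<^sup>*\<^sup>* z u"
proof (induct arbitrary: z rule: rtranclp_induct)
  case base then show ?case by (intro exI[of _ z]) simp
next
  case (step y w)
  from step(3)[OF step(4)] obtain u where u: "par y u" "par\<^sup>*\<^sup>* z u" by (elim exE conjE)
  from par_diamond[OF step(2) u(1)] obtain v where v: "par w v" "par u v" by (elim exE conjE)
  have "par\<^sup>*\<^sup>* z v" using u(2) v(2) by (rule rtranclp.rtrancl_into_rtrancl)
  with v(1) show ?case by (intro exI[of _ v]) simp
qed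

lemma par_confl: "par\<^sup>*\<^sup>* x z \<Longrightarrow> par\<^sup>*\<^sup>* x y \<Longrightarrow> \<exists>u. par\<^sup>*\<^sup>* y u \<and> par\<^sup>*\<^sup>* z u"
proof (induct arbitrary: y rule: rtranclp_induct)
  case base then show ?case by (intro exI[of _ y]) auto
next
  case (step w z)
  from step(3)[OF step(4)] obtain u where u: "par\<^sup>*\<^sup>* y u" "par\<^sup>*\<^sup>* w u" by (elim exE conjE)
  from par_strip[OF u(2) step(2)] obtain v where v: "par u v" "par\<^sup>*\<^sup>* z v" by (elim exE conjE)
  have "par\<^sup>*\<^sup>* y v" using u(1) v(1) by (rule rtranclp.rtrancl_into_rtrancl)
  with v(2) show ?case by (intro exI[of _ v]) simp
qed

lemma beta_rtc_eq: "beta\<^sup>*\<^sup>* = par\<^sup>*\<^sup>*"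
proof (intro ext iffI)
  fix x y assume "beta\<^sup>*\<^sup>* x y" then show "par\<^sup>*\<^sup>* x y"
    by (induct rule: rtranclp_induct) (auto intro: rtranclp.rtrancl_into_rtrancl beta_par)
next
  fix x y assume "par\<^sup>*\<^sup>* x y" then show "beta\<^sup>*\<^sup>* x y"
    by (induct rule: rtranclp_induct) (auto intro: rtranclp_trans par_beta)
qed

lemma beta_confluent: "confluentp beta"
  by (rule confluentpI) (unfold beta_rtc_eq, metis par_confl)

lemma conv_common: "beta_conv x y \<Longrightarrow> \<exists>z. beta\<^sup>*\<^sup>* x z \<and> beta\<^sup>*\<^sup>* y z"
proof -
  assume "beta_conv x y"
  then have "(beta\<^sup>*\<^sup>* OO beta\<inverse>\<inverse>\<^sup>*\<^sup>*) x y"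
    unfolding beta_conv_def
    using semiconfluentp_equivclp[OF confluentp_imp_semiconfluentp[OF beta_confluent]] by simp
  then show ?thesis by (auto simp: rtranclp_conversep)
qed


section \<open>Recursive type assignment over an abstract arrow structure\<close>

definition shift :: "(nat \<Rightarrow> 'a) \<Rightarrow> nat \<Rightarrow> 'a \<Rightarrow> nat \<Rightarrow> 'a" where
  "shift e i a = (\<lambda>j. if j < i then e j else if j = i then a else e (j - 1))"

lemma shift_eq [simp]: "i = j \<Longrightarrow> shift e i T j = T"
  by (simp add: shift_def)
lemma shift_gt [simp]: "j < i \<Longrightarrow> shift e i T j = e j"
  by (simp add: shift_def)
lemma shift_lt [simp]: "i < j \<Longrightarrow> shift e i T j = e (j - 1)"
  by (simp add: shift_def)
lemma shift_commute [simp]: "shift (shift e i U) 0 T = shift (shift e 0 T) (Suc i) U"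
  by (rule ext) (simp_all add: shift_def split: nat.split, force)

inductive tj :: "('a \<Rightarrow> ('a \<times> 'a) option) \<Rightarrow> (nat \<Rightarrow> 'a) \<Rightarrow> lterm \<Rightarrow> 'a \<Rightarrow> bool"
  for A where
  tvar: "tj A e (Var i) (e i)"
| tabs: "A c = Some (a, b) \<Longrightarrow> tj A (shift e 0 a) M b \<Longrightarrow> tj A e (Abs M) c"
| tapp: "tj A e M c \<Longrightarrow> A c = Some (a, b) \<Longrightarrow> tj A e N a \<Longrightarrow> tj A e (App M N) b"

inductive_cases tj_cases:
  "tj A e (Var i) T" "tj A e (Abs M) T" "tj A e (App M N) T"

lemma tvar': "e i = T \<Longrightarrow> tj A e (Var i) T"
  using tvar by metis

lemma lift_type: "tj A e t T \<Longrightarrow> tj A (shift e i U) (lift t i) T"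
proof (induct arbitrary: i U rule: tj.induct)
  case (tvar e j) then show ?case by (auto intro!: tvar')
next
  case (tabs c a b e M)
  then show ?case by (auto intro: tj.tabs)
next
  case (tapp e M c a b N)
  have "tj A (shift e i U) (App (lift M i) (lift N i)) b"
    by (rule tj.tapp[OF tapp(2) tapp(3) tapp(5)])
  then show ?case by simp
qed

lemma subst_lemma:
  "tj A e t T \<Longrightarrow> tj A e' u U \<Longrightarrow> e = shift e' i U \<Longrightarrow> tj A e' (subst t u i) T"
proof (induct arbitrary: e' i U u rule: tj.induct)
  case (tvar e j)
  show ?case
  proof (cases "j < i")
    case True then show ?thesis using tvar by (auto intro!: tvar')
  next
    case False then show ?thesis using tvar by (cases "j = i") (auto intro!: tvar')
  qed
next
  case (tabs c a b e M)
  have lu: "tj A (shift e' 0 a) (lift u 0) U" using tabs(4) by (rule lift_type)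
  have "tj A (shift e' 0 a) (subst M (lift u 0) (Suc i)) b"
    by (rule tabs(3)[OF lu]) (simp add: tabs(5))
  then show ?case using tabs by (auto intro: tj.tabs)
next
  case (tapp e M c a b N)
  have "tj A e' (App (subst M u i) (subst N u i)) b"
    by (rule tj.tapp[OF tapp(2)[OF tapp(6,7)] tapp(3) tapp(5)[OF tapp(6,7)]])
  then show ?case by simp
qed

lemma subject_reduction: "beta t t' \<Longrightarrow> tj A e t T \<Longrightarrow> tj A e t' T"
proof (induct arbitrary: e T rule: beta.induct)
  case (beta_redex s t)
  from beta_redex obtain c a where h: "tj A e (Abs s) c" "A c = Some (a, T)" "tj A e t a"
    by (auto elim: tj_cases)
  from h(1) obtain a' b' where "A c = Some (a', b')" "tj A (shift e 0 a') s b'"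
    by (auto elim: tj_cases)
  with h show ?case by (auto intro: subst_lemma)
next
  case (appL s t u) then show ?case by (auto elim!: tj_cases intro: tj.tapp)
next
  case (appR s t u) then show ?case by (auto elim!: tj_cases intro: tj.tapp)
next
  case (abs s t) then show ?case by (auto elim!: tj_cases intro: tj.tabs)
qed

lemma subject_reduction_rtc: "beta\<^sup>*\<^sup>* t t' \<Longrightarrow> tj A e t T \<Longrightarrow> tj A e t' T"
  by (induct rule: rtranclp_induct) (auto intro: subject_reduction)

definition parr :: "('a \<Rightarrow> ('a \<times> 'a) option) \<Rightarrow> ('b \<Rightarrow> ('b \<times> 'b) option)
   \<Rightarrow> ('a \<times> 'b) \<Rightarrow> (('a \<times> 'b) \<times> ('a \<times> 'b)) option" where
  "parr A B p = (case A (fst p) of None \<Rightarrow> None | Some (a, b) \<Rightarrow>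
      (case B (snd p) of None \<Rightarrow> None | Some (a', b') \<Rightarrow> Some ((a, a'), (b, b'))))"

lemma parr_Some: "A c = Some (a, b) \<Longrightarrow> B c' = Some (a', b') \<Longrightarrow>
  parr A B (c, c') = Some ((a, a'), (b, b'))"
  by (simp add: parr_def)

lemma shift_pair: "shift (\<lambda>i. (e i, e' i)) 0 (a, a') = (\<lambda>i. (shift e 0 a i, shift e' 0 a' i))"
  by (rule ext) (simp add: shift_def)

lemma tj_prod: "tj A e M t \<Longrightarrow> tj B e' M t' \<Longrightarrow> tj (parr A B) (\<lambda>i. (e i, e' i)) M (t, t')"
proof (induct arbitrary: e' t' rule: tj.induct)
  case (tvar e i)
  then show ?case by (auto elim!: tj_cases intro!: tvar')
next
  case (tabs c a b e M)
  from tabs(4) obtain a' b' where h: "B t' = Some (a', b')" "tj B (shift e' 0 a') M b'"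
    by (auto elim: tj_cases)
  from tabs(3)[OF h(2)] have "tj (parr A B) (shift (\<lambda>i. (e i, e' i)) 0 (a, a')) M (b, b')"
    by (simp add: shift_pair)
  then show ?case using tabs(1) h(1) by (auto intro: tj.tabs parr_Some)
next
  case (tapp e M c a b N)
  from tapp(6) obtain c' a' where h: "tj B e' M c'" "B c' = Some (a', t')" "tj B e' N a'"
    by (auto elim: tj_cases)
  show ?case using tapp(2)[OF h(1)] tapp(5)[OF h(3)] parr_Some[of A c a b B c' a' t', OF tapp(3) h(2)]
    by (auto intro: tj.tapp)
qed

definition consistent :: "('a \<Rightarrow> ('a \<times> 'a) option) \<Rightarrow> ('a \<Rightarrow> bool) \<Rightarrow> bool" where
  "consistent A v \<longleftrightarrow> (\<forall>c a b. A c = Some (a, b) \<longrightarrow> (v c \<longleftrightarrow> (v a \<longrightarrow> v b)))"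

lemma tj_sound: "tj A e M t \<Longrightarrow> consistent A v \<Longrightarrow> (\<forall>i. v (e i)) \<Longrightarrow> v t"
proof (induct rule: tj.induct)
  case (tvar e i) then show ?case by simp
next
  case (tabs c a b e M)
  have "v a \<Longrightarrow> v b"
    using tabs by (auto simp: shift_def)
  then show ?case using tabs(1,4) unfolding consistent_def by blast
next
  case (tapp e M c a b N)
  then show ?case unfolding consistent_def by blast
qed


section \<open>A concrete arrow structure with one recursive node\<close>

datatype ty = At nat | Ar ty ty | Lp

fun arr :: "ty \<Rightarrow> ty \<Rightarrow> (ty \<times> ty) option" where
  "arr s (Ar a b) = Some (a, b)"
| "arr s Lp = Some (Lp, s)"
| "arr s (At n) = None"

lemma appI: "tj (arr s) e M (Ar a b) \<Longrightarrow> tj (arr s) e N a \<Longrightarrow> tj (arr s) e (App M N) b"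
  by (rule tj.tapp) auto

lemma absI: "tj (arr s) (shift e 0 a) M b \<Longrightarrow> tj (arr s) e (Abs M) (Ar a b)"
  by (rule tj.tabs) auto

lemma tS: "tj (arr s) e combS (Ar (Ar P (Ar Q R)) (Ar (Ar P Q) (Ar P R)))"
  unfolding combS_def
  apply (intro absI)
  apply (rule appI[where a = Q])
   apply (rule appI[where a = P])
    apply (rule tvar', simp)
   apply (rule tvar', simp)
  apply (rule appI[where a = P])
   apply (rule tvar', simp)
  apply (rule tvar', simp)
  done

lemma tI: "tj (arr s) e combI (Ar t t)"
  unfolding combI_def by (intro absI) (rule tvar', simp)

lemma tB: "tj (arr s) e combB (Ar (Ar b c) (Ar (Ar a b) (Ar a c)))"
  unfolding combB_def
  apply (intro absI)
  apply (rule appI[where a = b])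
   apply (rule tvar', simp)
  apply (rule appI[where a = a])
   apply (rule tvar', simp)
  apply (rule tvar', simp)
  done

lemma tY: "tj (arr s) e combY0 (Ar (Ar s s) s)"
proof -
  have w: "tj (arr s) (shift e 0 (Ar s s)) (Abs (App (Var 1) (App (Var 0) (Var 0)))) Lp"
    apply (rule tj.tabs[where a = Lp and b = s])
     apply simp
    apply (rule appI[where a = s])
     apply (rule tvar', simp)
    apply (rule tj.tapp[where c = Lp and a = Lp])
      apply (rule tvar', simp)
     apply simp
    apply (rule tvar', simp)
    done
  show ?thesis
    unfolding combY0_def
    apply (rule absI)
    apply (rule tj.tapp[where c = Lp and a = Lp])
      apply (rule w)
     apply simp
    apply (rule w)
    done
qed

fun XY :: "nat \<Rightarrow> ty \<times> ty" where
  "XY 0 = (Ar (At 0) (At 0), At 0)"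
| "XY (Suc r) = (Ar (fst (XY r)) (Ar (snd (XY r)) (snd (XY r))), Ar (fst (XY r)) (snd (XY r)))"

definition Xr :: "nat \<Rightarrow> ty" where "Xr r = fst (XY r)"
definition Yr :: "nat \<Rightarrow> ty" where "Yr r = snd (XY r)"

lemma Xr0 [simp]: "Xr 0 = Ar (At 0) (At 0)" and Yr0 [simp]: "Yr 0 = At 0"
  and XrS [simp]: "Xr (Suc r) = Ar (Xr r) (Ar (Yr r) (Yr r))"
  and YrS [simp]: "Yr (Suc r) = Ar (Xr r) (Yr r)"
  by (simp_all add: Xr_def Yr_def)

lemma tpow: "j \<le> n \<Longrightarrow>
  tj (arr (Yr n)) e (app_pow (App combB combY0) combS j) (Ar (Xr (Suc n - j)) (Yr (Suc n - j)))"
proof (induct j)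
  case 0
  have "tj (arr (Yr n)) e (App combB combY0)
          (Ar (Ar (Xr n) (Ar (Yr n) (Yr n))) (Ar (Xr n) (Yr n)))"
    by (rule appI[OF tB tY])
  then show ?case by simp
next
  case (Suc j)
  define r where "r = n - Suc j"
  have r: "Suc n - j = Suc (Suc r)" "Suc n - Suc j = Suc r"
    using Suc.prems unfolding r_def by arith+
  from Suc have ih: "tj (arr (Yr n)) e (app_pow (App combB combY0) combS j)
     (Ar (Xr (Suc (Suc r))) (Yr (Suc (Suc r))))" using r by simp
  have "tj (arr (Yr n)) e (App (app_pow (App combB combY0) combS j) combS) (Yr (Suc (Suc r)))"
    apply (rule appI[OF ih])
    using tS[of "Yr n" e "Xr r" "Yr r" "Yr r"] by simp
  then show ?case using r by simp
qed

lemma tT: "tj (arr (Yr n)) e (App (app_pow (App combB combY0) combS n) combI) (Yr (Suc 0))"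
proof -
  have "Suc n - n = Suc 0" by simp
  then have "tj (arr (Yr n)) e (app_pow (App combB combY0) combS n) (Ar (Xr (Suc 0)) (Yr (Suc 0)))"
    using tpow[of n n e] by simp
  then show ?thesis
    by (rule appI) (simp only: XrS Xr0 Yr0 tI)
qed


section \<open>A Boolean valuation on the product structure\<close>

fun lp :: "ty \<Rightarrow> nat" where
  "lp (At n) = 0" | "lp (Ar a b) = lp a + lp b" | "lp Lp = 1"

fun clean :: "ty \<Rightarrow> ty" where
  "clean (At n) = At n" | "clean (Ar a b) = Ar (clean a) (clean b)" | "clean Lp = At 0"

lemma lp_clean [simp]: "lp (clean s) = 0"
  by (induct s) auto

lemma clean_id: "lp s = 0 \<Longrightarrow> clean s = s"
  by (induct s) auto

function vl :: "ty \<Rightarrow> ty \<Rightarrow> ty \<Rightarrow> ty \<Rightarrow> bool" where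
  "vl s s' (Ar a b) (Ar a' b') = (vl s s' a a' \<longrightarrow> vl s s' b b')"
| "vl s s' Lp Lp = True"
| "vl s s' Lp (Ar a b) = (vl s s' Lp a \<longrightarrow> vl s s' (clean s) b)"
| "vl s s' (Ar a b) Lp = (vl s s' a Lp \<longrightarrow> vl s s' b (clean s'))"
| "vl s s' (At i) (At j) = False"
| "vl s s' (At i) (Ar a b) = True"
| "vl s s' (At i) Lp = True"
| "vl s s' (Ar a b) (At j) = True"
| "vl s s' Lp (At j) = True"
  by pat_completeness auto
termination
  by (relation "measures [\<lambda>(s, s', x, y). lp x + lp y, \<lambda>(s, s', x, y). size x + size y]") auto

lemma vl_consistent:
  assumes "lp s = 0" "lp s' = 0" "vl s s' s s'"
  shows "consistent (parr (arr s) (arr s')) (\<lambda>p. vl s s' (fst p) (snd p))"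
  unfolding consistent_def
proof (intro allI impI)
  fix c a b assume h: "parr (arr s) (arr s') c = Some (a, b)"
  obtain x y where c: "c = (x, y)" by (cases c)
  show "vl s s' (fst c) (snd c) = (vl s s' (fst a) (snd a) \<longrightarrow> vl s s' (fst b) (snd b))"
    using h assms unfolding c
    by (cases x; cases y) (auto simp: parr_def clean_id)
qed

lemma vl_X: "vl s s' (Xr r) (Xr r')"
  by (cases r; cases r') auto

lemma vl_Y: "r \<noteq> r' \<Longrightarrow> vl s s' (Yr r) (Yr r')"
proof (induct r arbitrary: r')
  case 0 then show ?case by (cases r') auto
next
  case (Suc r) then show ?case by (cases r') (auto simp: vl_X)
qed

lemma lp_XY: "lp (Xr r) = 0 \<and> lp (Yr r) = 0"
  by (induct r) auto

theorem corollary6p15: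
  fixes n m :: nat
  assumes "n \<noteq> m"
  shows "\<not> beta_conv (App (app_pow (App combB combY0) combS n) combI)
                      (App (app_pow (App combB combY0) combS m) combI)"
proof
  let ?Tn = "App (app_pow (App combB combY0) combS n) combI"
  let ?Tm = "App (app_pow (App combB combY0) combS m) combI"
  assume "beta_conv ?Tn ?Tm"
  then obtain R where R: "beta\<^sup>*\<^sup>* ?Tn R" "beta\<^sup>*\<^sup>* ?Tm R" using conv_common by blast
  have "tj (arr (Yr n)) (\<lambda>_. Lp) R (Yr (Suc 0))"
    using subject_reduction_rtc[OF R(1) tT] .
  moreover have "tj (arr (Yr m)) (\<lambda>_. Lp) R (Yr (Suc 0))"
    using subject_reduction_rtc[OF R(2) tT] .
  ultimately have P: "tj (parr (arr (Yr n)) (arr (Yr m))) (\<lambda>i. (Lp, Lp)) R (Yr (Suc 0), Yr (Suc 0))"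
    using tj_prod by fastforce
  have cons: "consistent (parr (arr (Yr n)) (arr (Yr m))) (\<lambda>p. vl (Yr n) (Yr m) (fst p) (snd p))"
    using vl_consistent lp_XY vl_Y[OF assms] by blast
  have "vl (Yr n) (Yr m) (Yr (Suc 0)) (Yr (Suc 0))"
    using tj_sound[OF P cons] by simp
  then show False by simp
qed

end
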